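(* Let $n_0, L\in\mathbb{N}_+$, $n_1,\dots,n_L\in\mathbb{N}_+$, and let $h_l\in\mathrm{RL}(n_{l-1},n_l)$ for $l=1,\dots,L$, with $\mathbf{h}=(h_1,\dots,h_L)$. Let $\gamma\in\Gamma$. Then $$|\mathcal{S}_{\mathbf{h}}|\le\big\|\varphi^{(\gamma)}_{n_L}\circ\dots\circ\varphi^{(\gamma)}_{n_1}({\rm e}_{n_0})\big\|_1 .$$
   Context: $\mathbb{N}=\{0,1,2,\dots\}$, $\mathbb{N}_+=\mathbb{N}\setminus\{0\}$, $\sigma(x)=\max(0,x)$. For $n,n'\in\mathbb{N}_+$, $\mathrm{RL}(n,n')$ is the set of maps $h:\mathbb{R}^n\to\mathbb{R}^{n'}$ of the form $h(x)_i=\sigma(\langle x,w_i\rangle+b_i)$, $i=1,\dots,n'$, for some matrix $W\in\mathbb{R}^{n'\times n}$ with rows $w_i$ and $b\in\mathbb{R}^{n'}$. The signature $S_h(x)\in\{0,1\}^{n'}$ has $S_h(x)_i=1$ iff $\langle x,w_i\rangle+b_i>0$; $\mathcal{S}_h=\{S_h(x):x\in\mathbb{R}^n\}$. By convention $\mathrm{RL}(0,n')$ consists of the constant maps $\{0\}\to\mathbb{R}^{n'}$, and for such $h$ one sets $\mathcal{H}_{n'}(\mathcal{S}_h)={\rm e}_0$. For $\mathbf{h}=(h_1,\dots,h_L)$ the multi signature of $x\in\mathbb{R}^{n_0}$ is $S_{\mathbf{h}}(x)=(S_{h_1}(x),S_{h_2}(h_1(x)),\dots,S_{h_L}(h_{L-1}\circ\dots\circ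 h_1(x)))$ and $\mathcal{S}_{\mathbf{h}}=\{S_{\mathbf{h}}(x):x\in\mathbb{R}^{n_0}\}$. For $s\in\{0,1\}^{k}$, $|s|=\sum_i s_i$. Histograms: $V$ is the set of sequences $v=(v_j)_{j\in\mathbb{N}}$ of elements of $\mathbb{N}$ with $\sum_j v_j<\infty$; $\|v\|_1=\sum_j v_j$; ${\rm e}_i\in V$ has $({\rm e}_i)_j=\delta_{ij}$. For $v,w\in V$, $v\preceq w$ iff $\sum_{j\ge J}v_j\le\sum_{j\ge J}w_j$ for all $J\in\mathbb{N}$. For a finite family $(v^{(i)})_{i\in I}$ in $V$, $\max_{i}(v^{(i)})\in V$ is defined by $\max_i(v^{(i)})_J=\max_i\sum_{j\ge J}v^{(i)}_j-\max_i\sum_{j\ge J+1}v^{(i)}_j$. For $\mathcal{S}\subseteq\{0,1\}^{n'}$, the activation histogram is $\mathcal{H}_{n'}(\mathcal{S})=(|\{s\in\mathcal{S}:|s|=j\}|)_{j\in\mathbb{N}}$. Bound condition: $\Gamma$ is the set of families $\gamma=(\gamma_{n,n'})_{n'\in\mathbb{N}_+,\,n\in\{0,\dots,n'\}}$ of elements of $V$ such that (i) $\max\{\mathcal{H}_{n'}(\mathcal{S}_h):h\in\mathrm{RL}(n,n')\}\preceq\gamma_{n,n'}$ for all $n'\in\mathbb{N}_+$, $n\in\{0,\dots,n'\}$, and (ii) $n\le\tilde n\le n'$ implies $\gamma_{n,n'}\preceq\gamma_{\tilde n,n'}$. Clipping: for $i^*\in\mathbb{N}$, $\mathrm{cl}_{i^*}:V\to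 V$, $\mathrm{cl}_{i^*}(v)_i=v_i$ for $i<i^*$, $=\sum_{j\ge i^*}v_j$ for $i=i^*$, $=0$ for $i>i^*$. Transition map: for $n'\in\mathbb{N}_+$, $\gamma\in\Gamma$, $\varphi^{(\gamma)}_{n'}:V\to V$, $\varphi^{(\gamma)}_{n'}(v)=\sum_{n=0}^\infty v_n\,\mathrm{cl}_{\min(n,n')}(\gamma_{\min(n,n'),n'})$. *)

theory Defs
  imports Complex_Main
begin

definition is_hist :: "(nat \<Rightarrow> nat) \<Rightarrow> bool" where
  "is_hist v \<longleftrightarrow> finite {j. v j \<noteq> 0}"

definition norm1 :: "(nat \<Rightarrow> nat) \<Rightarrow> nat" where
  "norm1 v = (\<Sum>j\<in>{j. v j \<noteq> 0}. v j)"

definition unit_hist :: "nat \<Rightarrow> nat \<Rightarrow> nat" ("e\<^sub>h") where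
  "unit_hist i = (\<lambda>j. if j = i then 1 else 0)"

definition tail :: "(nat \<Rightarrow> nat) \<Rightarrow> nat \<Rightarrow> nat" where
  "tail v J = (\<Sum>j\<in>{j. J \<le> j \<and> v j \<noteq> 0}. v j)"

definition hist_le :: "(nat \<Rightarrow> nat) \<Rightarrow> (nat \<Rightarrow> nat) \<Rightarrow> bool" where
  "hist_le v w \<longleftrightarrow> (\<forall>J. tail v J \<le> tail w J)"

text \<open>Maximum of a finite (nonempty) family of histograms, given as the set of its members.\<close>
definition hist_max :: "(nat \<Rightarrow> nat) set \<Rightarrow> nat \<Rightarrow> nat" where
  "hist_max A J = Max ((\<lambda>v. tail v J) ` A) - Max ((\<lambda>v. tail v (Suc J)) ` A)"

text \<open>Activation histogram of a set of signatures (signatures are bool lists;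
  the number of active entries is the number of True entries).\<close>
definition act_hist :: "bool list set \<Rightarrow> nat \<Rightarrow> nat" where
  "act_hist S j = card {s \<in> S. length (filter id s) = j}"

text \<open>Points of R^n are functions nat => real vanishing outside {0..<n}.
  A layer in RL(n,n') is given by weights W (row i, column j) and biases b;
  only entries with i < n', j < n matter.\<close>
definition Rn :: "nat \<Rightarrow> (nat \<Rightarrow> real) set" where
  "Rn n = {x. \<forall>i\<ge>n. x i = 0}"

definition preact :: "(nat \<Rightarrow> nat \<Rightarrow> real) \<Rightarrow> (nat \<Rightarrow> real) \<Rightarrow> nat \<Rightarrow> (nat \<Rightarrow> real) \<Rightarrow> nat \<Rightarrow> real" where
  "preact W b n x i = (\<Sum>j<n. W i j * x j) + b i"

definition relu_layer :: "(nat \<Rightarrow> nat \<Rightarrow> real) \<Rightarrow> (nat \<Rightarrow> real) \<Rightarrow> nat \<Rightarrow> nat \<Rightarrow> (nat \<Rightarrow> real) \<Rightarrow> (nat \<Rightarrow> real)" where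
  "relu_layer W b n n' x = (\<lambda>i. if i < n' then max 0 (preact W b n x i) else 0)"

definition signature :: "(nat \<Rightarrow> nat \<Rightarrow> real) \<Rightarrow> (nat \<Rightarrow> real) \<Rightarrow> nat \<Rightarrow> nat \<Rightarrow> (nat \<Rightarrow> real) \<Rightarrow> bool list" where
  "signature W b n n' x = map (\<lambda>i. preact W b n x i > 0) [0..<n']"

definition sig_set :: "(nat \<Rightarrow> nat \<Rightarrow> real) \<Rightarrow> (nat \<Rightarrow> real) \<Rightarrow> nat \<Rightarrow> nat \<Rightarrow> bool list set" where
  "sig_set W b n n' = signature W b n n' ` Rn n"

text \<open>The set of activation histograms of layers in RL(n,n'); for n = 0 the
  convention of the paper sets the histogram to e_0.\<close>
definition RL_hists :: "nat \<Rightarrow> nat \<Rightarrow> (nat \<Rightarrow> nat) set" where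
  "RL_hists n n' = (if n = 0 then {e\<^sub>h 0}
     else {act_hist (sig_set W b n n') | W b. True})"

definition in_Gamma :: "(nat \<Rightarrow> nat \<Rightarrow> nat \<Rightarrow> nat) \<Rightarrow> bool" where
  "in_Gamma \<gamma> \<longleftrightarrow>
     (\<forall>n' n. 1 \<le> n' \<and> n \<le> n' \<longrightarrow> is_hist (\<gamma> n n')) \<and>
     (\<forall>n' n. 1 \<le> n' \<and> n \<le> n' \<longrightarrow> hist_le (hist_max (RL_hists n n')) (\<gamma> n n')) \<and>
     (\<forall>n' n m. 1 \<le> n' \<and> n \<le> m \<and> m \<le> n' \<longrightarrow> hist_le (\<gamma> n n') (\<gamma> m n'))"

definition clip :: "nat \<Rightarrow> (nat \<Rightarrow> nat) \<Rightarrow> nat \<Rightarrow> nat" where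
  "clip i0 v = (\<lambda>i. if i < i0 then v i else if i = i0 then tail v i0 else 0)"

definition trans_map :: "(nat \<Rightarrow> nat \<Rightarrow> nat \<Rightarrow> nat) \<Rightarrow> nat \<Rightarrow> (nat \<Rightarrow> nat) \<Rightarrow> nat \<Rightarrow> nat" where
  "trans_map \<gamma> n' v = (\<lambda>k. \<Sum>n\<in>{n. v n \<noteq> 0}. v n * clip (min n n') (\<gamma> (min n n') n') k)"

text \<open>Layer l (1 <= l <= L) has weights Ws l, biases bs l and maps R^(ns (l-1)) to R^(ns l).\<close>
fun net_out :: "(nat \<Rightarrow> nat \<Rightarrow> nat \<Rightarrow> real) \<Rightarrow> (nat \<Rightarrow> nat \<Rightarrow> real) \<Rightarrow> (nat \<Rightarrow> nat) \<Rightarrow> nat \<Rightarrow> (nat \<Rightarrow> real) \<Rightarrow> (nat \<Rightarrow> real)" where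
  "net_out Ws bs ns 0 x = x"
| "net_out Ws bs ns (Suc k) x = relu_layer (Ws (Suc k)) (bs (Suc k)) (ns k) (ns (Suc k)) (net_out Ws bs ns k x)"

definition multi_sig :: "(nat \<Rightarrow> nat \<Rightarrow> nat \<Rightarrow> real) \<Rightarrow> (nat \<Rightarrow> nat \<Rightarrow> real) \<Rightarrow> (nat \<Rightarrow> nat) \<Rightarrow> nat \<Rightarrow> (nat \<Rightarrow> real) \<Rightarrow> bool list list" where
  "multi_sig Ws bs ns L x = map (\<lambda>l. signature (Ws l) (bs l) (ns (l - 1)) (ns l) (net_out Ws bs ns (l - 1) x)) [1..<Suc L]"

definition multi_sig_set :: "(nat \<Rightarrow> nat \<Rightarrow> nat \<Rightarrow> real) \<Rightarrow> (nat \<Rightarrow> nat \<Rightarrow> real) \<Rightarrow> (nat \<Rightarrow> nat) \<Rightarrow> nat \<Rightarrow> bool list list set" where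
  "multi_sig_set Ws bs ns L = multi_sig Ws bs ns L ` Rn (ns 0)"

fun trans_iter :: "(nat \<Rightarrow> nat \<Rightarrow> nat \<Rightarrow> nat) \<Rightarrow> (nat \<Rightarrow> nat) \<Rightarrow> nat \<Rightarrow> nat \<Rightarrow> nat" where
  "trans_iter \<gamma> ns 0 = e\<^sub>h (ns 0)"
| "trans_iter \<gamma> ns (Suc k) = trans_map \<gamma> (ns (Suc k)) (trans_iter \<gamma> ns k)"

end

theory Submission
  imports Defs
begin

lemma tail_upto:
  assumes "\<forall>j>B. v j = 0"
  shows "tail v J = (\<Sum>j\<in>{J..B}. v j)"
proof -
  have "tail v J = (\<Sum>j\<in>{j. J \<le> j \<and> v j \<noteq> 0}. v j)" by (simp add: tail_def)
  also have "\<dots> = (\<Sum>j\<in>{J..B}. v j)"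
  proof (rule sum.mono_neutral_left)
    show "{j. J \<le> j \<and> v j \<noteq> 0} \<subseteq> {J..B}"
    proof
      fix x assume "x \<in> {j. J \<le> j \<and> v j \<noteq> 0}"
      then show "x \<in> {J..B}" using assms by (cases "x \<le> B") auto
    qed
  qed auto
  finally show ?thesis .
qed

lemma norm1_tail: "norm1 v = tail v 0"
  by (simp add: norm1_def tail_def)

lemma is_hist_bound:
  assumes "is_hist v" obtains B where "\<forall>j>B. v j = 0"
proof -
  from assms have "finite {j. v j \<noteq> 0}" by (simp add: is_hist_def)
  then obtain B where "\<forall>j\<in>{j. v j \<noteq> 0}. j \<le> B" using finite_nat_set_iff_bounded_le by blast
  then have "\<forall>j>B. v j = 0" by force
  then show ?thesis using that by blast
qed

lemma tail_Suc_le: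
  assumes "\<forall>j>B. v j = 0"
  shows "tail v (Suc J) \<le> tail v J"
  using assms by (simp add: tail_upto, intro sum_mono2) auto

lemma tail_zero_beyond:
  assumes "\<forall>j>B. v j = 0" "J > B"
  shows "tail v J = 0"
  using assms by (simp add: tail_upto)

lemma telescope:
  assumes "\<And>j. f (Suc j) \<le> (f j::nat)" "J \<le> Suc B"
  shows "(\<Sum>j\<in>{J..B}. f j - f (Suc j)) = f J - f (Suc B)"
  using assms(2)
proof (induction B)
  case 0
  then show ?case by (cases J) auto
next
  case (Suc B)
  have dec: "decseq f" using assms(1) by (rule decseq_SucI)
  show ?case
  proof (cases "J = Suc (Suc B)")
    case True then show ?thesis by simp
  next
    case False
    then have J: "J \<le> Suc B" using Suc.prems by simp
    have "{J..Suc B} = insert (Suc B) {J..B}" using J by auto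
    then have "(\<Sum>j\<in>{J..Suc B}. f j - f (Suc j)) = (f (Suc B) - f (Suc (Suc B))) + (f J - f (Suc B))"
      using Suc.IH[OF J] by simp
    moreover have "f (Suc B) \<le> f J" using dec J decseqD by blast
    moreover have "f (Suc (Suc B)) \<le> f (Suc B)" using assms(1) by blast
    ultimately show ?thesis by simp
  qed
qed

lemma tail_hist_max_ge:
  assumes "finite A" "v \<in> A" "\<forall>w\<in>A. \<forall>j>B. w j = 0"
  shows "tail v J \<le> tail (hist_max A) J"
proof -
  define M where "M j = Max ((\<lambda>w. tail w j) ` A)" for j
  have ne: "A \<noteq> {}" using assms by auto
  have Mge: "tail w j \<le> M j" if "w \<in> A" for w j
    unfolding M_def using assms(1) that by (intro Max_ge) auto
  have Mdec: "M (Suc j) \<le> M j" for j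
  proof -
    have "\<forall>w\<in>A. tail w (Suc j) \<le> M j"
    proof
      fix w assume w: "w \<in> A"
      have "tail w (Suc j) \<le> tail w j" using tail_Suc_le assms(3) w by blast
      then show "tail w (Suc j) \<le> M j" using Mge[OF w, of j] by linarith
    qed
    then show ?thesis unfolding M_def using assms(1) ne by (subst Max_le_iff) auto
  qed
  have M0: "M j = 0" if "j > B" for j
  proof -
    have "\<forall>w\<in>A. tail w j = 0" using tail_zero_beyond assms(3) that by metis
    then have "(\<lambda>w. tail w j) ` A = {0}" using ne by auto
    then show ?thesis unfolding M_def by simp
  qed
  have hm: "hist_max A j = M j - M (Suc j)" for j unfolding hist_max_def M_def by simp
  have hm0: "\<forall>j>B. hist_max A j = 0" using hm M0 by simp
  have "tail (hist_max A) J = M J"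
  proof (cases "J \<le> Suc B")
    case True
    have "tail (hist_max A) J = (\<Sum>j\<in>{J..B}. hist_max A j)"
      using tail_upto[OF hm0] by simp
    also have "\<dots> = (\<Sum>j\<in>{J..B}. M j - M (Suc j))" using hm by simp
    also have "\<dots> = M J - M (Suc B)" by (rule telescope[of M, OF Mdec True])
    finally show ?thesis using M0 by simp
  next
    case False
    then show ?thesis using tail_zero_beyond[OF hm0] M0 by simp
  qed
  then show ?thesis using Mge assms(2) by simp
qed


lemma clip_zero: "\<forall>j>m. clip m w j = 0"
  by (simp add: clip_def)

lemma tail_clip:
  assumes "\<forall>j>B. w j = 0"
  shows "tail (clip m w) J = (if J \<le> m then tail w J else 0)"
proof (cases "J \<le> m")
  case True
  define C where "C = max B m"
  have wC: "\<forall>j>C. w j = 0" using assms unfolding C_def by simp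
  have "tail (clip m w) J = (\<Sum>j\<in>{J..m}. clip m w j)" using tail_upto[OF clip_zero] by blast
  also have "\<dots> = (\<Sum>j\<in>{J..<Suc m}. clip m w j)" by (simp add: atLeastLessThanSuc_atLeastAtMost)
  also have "\<dots> = (\<Sum>j\<in>{J..<m}. clip m w j) + clip m w m" using True by simp
  also have "\<dots> = (\<Sum>j\<in>{J..<m}. w j) + tail w m" by (simp add: clip_def)
  also have "tail w m = (\<Sum>j\<in>{m..<Suc C}. w j)" using tail_upto[OF wC]
    by (simp add: atLeastLessThanSuc_atLeastAtMost)
  also have "(\<Sum>j\<in>{J..<m}. w j) + (\<Sum>j\<in>{m..<Suc C}. w j) = (\<Sum>j\<in>{J..<Suc C}. w j)"
    using True by (intro sum.atLeastLessThan_concat) (auto simp: C_def)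
  also have "\<dots> = tail w J" using tail_upto[OF wC]
    by (simp add: atLeastLessThanSuc_atLeastAtMost)
  finally show ?thesis using True by simp
next
  case False
  then show ?thesis using tail_zero_beyond[OF clip_zero] by simp
qed

lemma trans_map_zero: "\<forall>j>n'. trans_map \<gamma> n' v j = 0"
proof (intro allI impI)
  fix j assume "j > n'"
  then have "\<forall>k. clip (min k n') (\<gamma> (min k n') n') j = 0" by (auto simp: clip_def min_def)
  then show "trans_map \<gamma> n' v j = 0" unfolding trans_map_def by simp
qed

lemma tail_trans_map:
  assumes "finite {k. v k \<noteq> 0}"
  shows "tail (trans_map \<gamma> n' v) J =
    (\<Sum>k\<in>{k. v k \<noteq> 0}. v k * tail (clip (min k n') (\<gamma> (min k n') n')) J)"
proof -
  have cz: "\<forall>j>n'. clip (min k n') w j = 0" for k w by (simp add: clip_def)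
  have "tail (trans_map \<gamma> n' v) J = (\<Sum>j\<in>{J..n'}. trans_map \<gamma> n' v j)"
    using tail_upto[OF trans_map_zero] by blast
  also have "\<dots> = (\<Sum>j\<in>{J..n'}. \<Sum>k\<in>{k. v k \<noteq> 0}. v k * clip (min k n') (\<gamma> (min k n') n') j)"
    by (simp add: trans_map_def)
  also have "\<dots> = (\<Sum>k\<in>{k. v k \<noteq> 0}. \<Sum>j\<in>{J..n'}. v k * clip (min k n') (\<gamma> (min k n') n') j)"
    by (rule sum.swap)
  also have "\<dots> = (\<Sum>k\<in>{k. v k \<noteq> 0}. v k * (\<Sum>j\<in>{J..n'}. clip (min k n') (\<gamma> (min k n') n') j))"
    by (simp add: sum_distrib_left)
  also have "\<dots> = (\<Sum>k\<in>{k. v k \<noteq> 0}. v k * tail (clip (min k n') (\<gamma> (min k n') n')) J)"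
    using tail_upto[OF cz] by simp
  finally show ?thesis .
qed

lemma card_fibres:
  assumes "finite S" "finite A"
  shows "card {s\<in>S. f s \<in> A} = (\<Sum>j\<in>A. card {s\<in>S. f s = j})"
  using assms(2)
proof (induction A rule: finite_induct)
  case empty then show ?case by simp
next
  case (insert a A)
  have "{s\<in>S. f s \<in> insert a A} = {s\<in>S. f s = a} \<union> {s\<in>S. f s \<in> A}" by auto
  moreover have "card ({s\<in>S. f s = a} \<union> {s\<in>S. f s \<in> A}) = card {s\<in>S. f s = a} + card {s\<in>S. f s \<in> A}"
    using insert assms(1) by (intro card_Un_disjoint) auto
  ultimately show ?case using insert by simp
qed

lemma tail_act_hist:
  assumes "finite S" "\<forall>s\<in>S. length s \<le> N"
  shows "tail (act_hist S) J = card {s\<in>S. J \<le> length (filter id s)}"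
proof -
  have z: "\<forall>j>N. act_hist S j = 0"
  proof (intro allI impI)
    fix j assume "j > N"
    then have "{s \<in> S. length (filter id s) = j} = {}"
      using assms(2) by (metis (mono_tags, lifting) Collect_empty_eq leD length_filter_le order_trans)
    then show "act_hist S j = 0" by (metis act_hist_def card.empty)
  qed
  have "tail (act_hist S) J = (\<Sum>j\<in>{J..N}. act_hist S j)"
    by (rule tail_upto[OF z])
  also have "\<dots> = (\<Sum>j\<in>{J..N}. card {s\<in>S. length (filter id s) = j})"
    by (simp add: act_hist_def)
  also have "\<dots> = card {s\<in>S. length (filter id s) \<in> {J..N}}"
    using card_fibres[OF assms(1), of "{J..N}" "\<lambda>s. length (filter id s)"] by (simp only: finite_atLeastAtMost)
  also have "{s\<in>S. length (filter id s) \<in> {J..N}} = {s\<in>S. J \<le> length (filter id s)}"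
    using assms(2) by (auto intro: order_trans[OF length_filter_le])
  finally show ?thesis .
qed


lemma ind_sum: "a \<le> M \<Longrightarrow> (\<Sum>c<M. of_bool (c < a)) = (a::nat)"
proof -
  assume "a \<le> M"
  then have "{..<M} \<inter> {c. c < a} = {..<a}" by auto
  then show ?thesis by simp
qed

lemma abel:
  fixes g :: "nat \<Rightarrow> nat" and d :: "'a \<Rightarrow> nat"
  assumes "finite S" "finite K" "\<forall>J. card {s\<in>S. J \<le> d s} \<le> (\<Sum>k\<in>{k\<in>K. J \<le> k}. w k)"
    and "mono g"
  shows "(\<Sum>s\<in>S. g (d s)) \<le> (\<Sum>k\<in>K. w k * g k)"
proof -
  define M where "M = (\<Sum>s\<in>S. g (d s)) + (\<Sum>k\<in>K. g k)"
  have M1: "g (d s) \<le> M" if "s \<in> S" for s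
  proof -
    have "g (d s) \<le> (\<Sum>s\<in>S. g (d s))" using that assms(1) by (intro member_le_sum) auto
    then show ?thesis unfolding M_def by linarith
  qed
  have M2: "g k \<le> M" if "k \<in> K" for k
  proof -
    have "g k \<le> (\<Sum>k\<in>K. g k)" using that assms(2) by (intro member_le_sum) auto
    then show ?thesis unfolding M_def by linarith
  qed
  have "(\<Sum>s\<in>S. g (d s)) = (\<Sum>s\<in>S. \<Sum>c<M. of_bool (c < g (d s)))"
    using M1 ind_sum by (intro sum.cong) auto
  also have "\<dots> = (\<Sum>c<M. \<Sum>s\<in>S. of_bool (c < g (d s)))" by (rule sum.swap)
  also have "\<dots> = (\<Sum>c<M. card {s\<in>S. c < g (d s)})"
    using assms(1) by (intro sum.cong) (auto simp: Int_def)
  also have "\<dots> \<le> (\<Sum>c<M. \<Sum>k\<in>{k\<in>K. c < g k}. w k)"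
  proof (rule sum_mono)
    fix c
    show "card {s\<in>S. c < g (d s)} \<le> (\<Sum>k\<in>{k\<in>K. c < g k}. w k)"
    proof (cases "\<exists>k. c < g k")
      case True
      define J where "J = (LEAST k. c < g k)"
      have iff: "c < g k \<longleftrightarrow> J \<le> k" for k
      proof
        assume "c < g k" then show "J \<le> k" unfolding J_def by (rule Least_le)
      next
        assume "J \<le> k"
        moreover have "c < g J" unfolding J_def using True by (metis LeastI)
        ultimately show "c < g k" using assms(4) monoD order_less_le_trans by blast
      qed
      have "card {s\<in>S. c < g (d s)} = card {s\<in>S. J \<le> d s}" using iff by simp
      also have "\<dots> \<le> (\<Sum>k\<in>{k\<in>K. J \<le> k}. w k)" using assms(3) by blast
      also have "\<dots> = (\<Sum>k\<in>{k\<in>K. c < g k}. w k)" using iff by simp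
      finally show ?thesis .
    next
      case False
      then show ?thesis by simp
    qed
  qed
  also have "\<dots> = (\<Sum>c<M. \<Sum>k\<in>K. w k * of_bool (c < g k))"
    by (rule sum.cong[OF refl]) (auto simp: sum.inter_filter[OF assms(2)] of_bool_def intro!: sum.cong)
  also have "\<dots> = (\<Sum>k\<in>K. \<Sum>c<M. w k * of_bool (c < g k))" by (rule sum.swap)
  also have "\<dots> = (\<Sum>k\<in>K. w k * g k)"
    using M2 ind_sum by (intro sum.cong refl) (simp add: sum_distrib_left[symmetric])
  finally show ?thesis .
qed


definition aff :: "'a set \<Rightarrow> ('a \<Rightarrow> nat \<Rightarrow> real) \<Rightarrow> nat \<Rightarrow> nat \<Rightarrow> bool" where
  "aff S F d N \<longleftrightarrow> (\<exists>c u. \<forall>x\<in>S. \<exists>\<tau>. \<forall>j<N. F x j = c j + (\<Sum>i<d. \<tau> i * u i j))"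

lemma aff_subset: "aff S F d N \<Longrightarrow> S' \<subseteq> S \<Longrightarrow> aff S' F d N"
  unfolding aff_def by blast

lemma aff_empty: "aff {} F d N"
  unfolding aff_def by blast

lemma aff_mono:
  assumes "aff S F d N" "d \<le> d'"
  shows "aff S F d' N"
proof -
  obtain c u where cu: "\<forall>x\<in>S. \<exists>\<tau>. \<forall>j<N. F x j = c j + (\<Sum>i<d. \<tau> i * u i j)"
    using assms(1) unfolding aff_def by blast
  have "\<forall>x\<in>S. \<exists>\<tau>. \<forall>j<N. F x j = c j + (\<Sum>i<d'. \<tau> i * u i j)"
  proof
    fix x assume "x \<in> S"
    then obtain \<tau> where t: "\<forall>j<N. F x j = c j + (\<Sum>i<d. \<tau> i * u i j)" using cu by blast
    define \<tau>' where "\<tau>' i = (if i < d then \<tau> i else 0)" for i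
    have "(\<Sum>i<d'. \<tau>' i * u i j) = (\<Sum>i<d. \<tau> i * u i j)" for j
    proof -
      have "(\<Sum>i<d'. \<tau>' i * u i j) = (\<Sum>i<d. \<tau>' i * u i j)"
        using assms(2) by (intro sum.mono_neutral_right) (auto simp: \<tau>'_def)
      also have "\<dots> = (\<Sum>i<d. \<tau> i * u i j)" by (intro sum.cong) (auto simp: \<tau>'_def)
      finally show ?thesis .
    qed
    then show "\<exists>\<tau>. \<forall>j<N. F x j = c j + (\<Sum>i<d'. \<tau> i * u i j)" using t by metis
  qed
  then show ?thesis unfolding aff_def by blast
qed

lemma aff_min: "aff S F d N \<Longrightarrow> aff S F d' N \<Longrightarrow> aff S F (min d d') N"
  by (cases "d \<le> d'") (auto simp: min_def)

lemma sum_if_eq: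
  assumes "finite A"
  shows "(\<Sum>i\<in>A. f i * (if i = j then 1 else 0)) = (if j \<in> A then f j else (0::real))"
    and "(\<Sum>i\<in>A. f i * (if j = i then 1 else 0)) = (if j \<in> A then f j else (0::real))"
proof -
  have "(\<Sum>i\<in>A. f i * (if i = j then 1 else 0)) = (\<Sum>i\<in>A. if i = j then f i else 0)"
    by (rule sum.cong) auto
  then show "(\<Sum>i\<in>A. f i * (if i = j then 1 else 0)) = (if j \<in> A then f j else (0::real))"
    using sum.delta[OF assms, of j f] by simp
  have "(\<Sum>i\<in>A. f i * (if j = i then 1 else 0)) = (\<Sum>i\<in>A. if i = j then f i else 0)"
    by (rule sum.cong) auto
  then show "(\<Sum>i\<in>A. f i * (if j = i then 1 else 0)) = (if j \<in> A then f j else (0::real))"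
    using sum.delta[OF assms, of j f] by simp
qed

lemma aff_coord: "aff S F N N"
proof -
  have "\<forall>x\<in>S. \<exists>\<tau>. \<forall>j<N. F x j = 0 + (\<Sum>i<N. \<tau> i * (if i = j then 1 else 0))"
  proof
    fix x assume "x \<in> S"
    have "\<forall>j<N. F x j = 0 + (\<Sum>i<N. F x i * (if i = j then 1 else 0))"
      using sum_if_eq(1)[of "{..<N}" "F x"] by simp
    then show "\<exists>\<tau>. \<forall>j<N. F x j = 0 + (\<Sum>i<N. \<tau> i * (if i = j then 1 else 0))" by blast
  qed
  then show ?thesis unfolding aff_def by (intro exI[of _ "\<lambda>_. 0"] exI[of _ "\<lambda>i j. if i = j then 1 else 0"]) simp
qed

lemma aff_preact:
  assumes "aff S G d n"
  shows "aff S (\<lambda>x. preact W b n (G x)) d N"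
proof -
  obtain c u where cu: "\<forall>x\<in>S. \<exists>\<tau>. \<forall>j<n. G x j = c j + (\<Sum>i<d. \<tau> i * u i j)"
    using assms(1) unfolding aff_def by blast
  define c' where "c' j = (\<Sum>k<n. W j k * c k) + b j" for j
  define u' where "u' i j = (\<Sum>k<n. W j k * u i k)" for i j
  have "\<forall>x\<in>S. \<exists>\<tau>. \<forall>j<N. preact W b n (G x) j = c' j + (\<Sum>i<d. \<tau> i * u' i j)"
  proof
    fix x assume "x \<in> S"
    then obtain \<tau> where t: "\<forall>j<n. G x j = c j + (\<Sum>i<d. \<tau> i * u i j)" using cu by blast
    have "preact W b n (G x) j = c' j + (\<Sum>i<d. \<tau> i * u' i j)" for j
    proof -
      have "preact W b n (G x) j = (\<Sum>k<n. W j k * (c k + (\<Sum>i<d. \<tau> i * u i k))) + b j"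
        unfolding preact_def using t by simp
      also have "\<dots> = (\<Sum>k<n. W j k * c k) + (\<Sum>k<n. \<Sum>i<d. W j k * (\<tau> i * u i k)) + b j"
        by (simp add: distrib_left sum.distrib sum_distrib_left)
      also have "(\<Sum>k<n. \<Sum>i<d. W j k * (\<tau> i * u i k)) = (\<Sum>i<d. \<Sum>k<n. W j k * (\<tau> i * u i k))"
        by (rule sum.swap)
      also have "\<dots> = (\<Sum>i<d. \<tau> i * u' i j)"
        unfolding u'_def by (simp add: sum_distrib_left mult.left_commute)
      finally show ?thesis unfolding c'_def by simp
    qed
    then show "\<exists>\<tau>. \<forall>j<N. preact W b n (G x) j = c' j + (\<Sum>i<d. \<tau> i * u' i j)" by blast
  qed
  then show ?thesis unfolding aff_def by blast
qed

lemma relu_sig: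
  assumes "signature W b n n' y = t" "j < n'"
  shows "relu_layer W b n n' y j = (if t ! j then preact W b n y j else 0)"
  using assms unfolding relu_layer_def signature_def by auto

lemma aff_relu:
  assumes "aff S G d n" "\<forall>x\<in>S. signature W b n n' (G x) = t"
  shows "aff S (\<lambda>x. relu_layer W b n n' (G x)) d n'"
proof -
  obtain c u where cu: "\<forall>x\<in>S. \<exists>\<tau>. \<forall>j<n'. preact W b n (G x) j = c j + (\<Sum>i<d. \<tau> i * u i j)"
    using aff_preact[OF assms(1), of W b n'] unfolding aff_def by blast
  define c' where "c' j = (if t ! j then c j else 0)" for j
  define u' where "u' i j = (if t ! j then u i j else 0)" for i j
  have "\<forall>x\<in>S. \<exists>\<tau>. \<forall>j<n'. relu_layer W b n n' (G x) j = c' j + (\<Sum>i<d. \<tau> i * u' i j)"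
  proof
    fix x assume x: "x \<in> S"
    then obtain \<tau> where t: "\<forall>j<n'. preact W b n (G x) j = c j + (\<Sum>i<d. \<tau> i * u i j)" using cu by blast
    have "\<forall>j<n'. relu_layer W b n n' (G x) j = c' j + (\<Sum>i<d. \<tau> i * u' i j)"
      using relu_sig[OF assms(2)[rule_format, OF x]] t by (simp add: c'_def u'_def)
    then show "\<exists>\<tau>. \<forall>j<n'. relu_layer W b n n' (G x) j = c' j + (\<Sum>i<d. \<tau> i * u' i j)" by blast
  qed
  then show ?thesis unfolding aff_def by blast
qed

lemma length_filter_id_nth: "length (filter id t) = length (filter (nth t) [0..<length t])"
proof -
  have "filter id t = filter id (map (nth t) [0..<length t])" by (simp add: map_nth)
  also have "\<dots> = map (nth t) (filter (nth t) [0..<length t])" by (simp add: filter_map comp_def)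
  finally show ?thesis by simp
qed

lemma sum_nth_distinct:
  assumes "distinct xs"
  shows "(\<Sum>k<length xs. f (xs ! k)) = (\<Sum>y\<in>set xs. f y)"
  using sum.reindex_bij_betw[OF bij_betw_nth[OF assms refl refl], of f] by simp

lemma aff_relu_cnt:
  assumes "\<forall>x\<in>S. signature W b n n' (G x) = t"
  shows "aff S (\<lambda>x. relu_layer W b n n' (G x)) (length (filter id t)) n'"
proof (cases "S = {}")
  case True then show ?thesis by (simp add: aff_empty)
next
  case False
  then obtain x0 where "x0 \<in> S" by blast
  then have lt: "length t = n'" using assms unfolding signature_def by auto
  define js where "js = filter (nth t) [0..<n']"
  have ljs: "length js = length (filter id t)" using length_filter_id_nth[of t] lt by (simp add: js_def)
  have djs: "distinct js" by (simp add: js_def)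
  have sjs: "j \<in> set js \<longleftrightarrow> j < n' \<and> t ! j" for j by (auto simp: js_def)
  have "\<forall>x\<in>S. \<exists>\<tau>. \<forall>j<n'. relu_layer W b n n' (G x) j
      = 0 + (\<Sum>i<length js. \<tau> i * (if j = js ! i then 1 else 0))"
  proof
    fix x assume x: "x \<in> S"
    let ?r = "relu_layer W b n n' (G x)"
    have "\<forall>j<n'. ?r j = 0 + (\<Sum>i<length js. ?r (js ! i) * (if j = js ! i then 1 else 0))"
    proof (intro allI impI)
      fix j assume j: "j < n'"
      have "(\<Sum>i<length js. ?r (js ! i) * (if j = js ! i then 1 else 0))
          = (\<Sum>y\<in>set js. ?r y * (if j = y then 1 else 0))"
        using sum_nth_distinct[OF djs, of "\<lambda>y. ?r y * (if j = y then 1 else 0)"] by simp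
      also have "\<dots> = (if j \<in> set js then ?r j else 0)"
        by (rule sum_if_eq(2)) simp
      also have "\<dots> = ?r j"
        using relu_sig[OF assms[rule_format, OF x] j] sjs j by simp
      finally show "?r j = 0 + (\<Sum>i<length js. ?r (js ! i) * (if j = js ! i then 1 else 0))" by simp
    qed
    then show "\<exists>\<tau>. \<forall>j<n'. ?r j = 0 + (\<Sum>i<length js. \<tau> i * (if j = js ! i then 1 else 0))" by (rule exI[of _ "\<lambda>i. ?r (js ! i)"])
  qed
  then have "aff S (\<lambda>x. relu_layer W b n n' (G x)) (length js) n'"
    unfolding aff_def by (intro exI[of _ "\<lambda>_. 0"] exI[of _ "\<lambda>i j. if j = js ! i then 1 else 0"])
  then show ?thesis using ljs by simp
qed


definition dmin :: "nat \<Rightarrow> bool list list \<Rightarrow> nat" where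
  "dmin n0 s = foldl (\<lambda>a t. min a (length (filter id t))) n0 s"

lemma dmin_Nil[simp]: "dmin n0 [] = n0" by (simp add: dmin_def)
lemma dmin_snoc[simp]: "dmin n0 (s @ [t]) = min (dmin n0 s) (length (filter id t))"
  by (simp add: dmin_def)

lemma ms_0[simp]: "multi_sig Ws bs ns 0 x = []"
  by (simp add: multi_sig_def)

lemma ms_Suc: "multi_sig Ws bs ns (Suc l) x = multi_sig Ws bs ns l x @
   [signature (Ws (Suc l)) (bs (Suc l)) (ns l) (ns (Suc l)) (net_out Ws bs ns l x)]"
  by (simp add: multi_sig_def)

lemma net_out_Suc_fun:
  "(\<lambda>x. relu_layer (Ws (Suc l)) (bs (Suc l)) (ns l) (ns (Suc l)) (net_out Ws bs ns l x)) = net_out Ws bs ns (Suc l)"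
  by (rule ext) simp

lemma geom:
  "aff {x \<in> Rn (ns 0). multi_sig Ws bs ns l x = s} (net_out Ws bs ns l) (dmin (ns 0) s) (ns l)"
proof (induction l arbitrary: s)
  case 0
  show ?case
  proof (cases "s = []")
    case True then show ?thesis using aff_coord by simp
  next
    case False
    then have "{x \<in> Rn (ns 0). multi_sig Ws bs ns 0 x = s} = {}" by auto
    then show ?thesis using aff_empty by metis
  qed
next
  case (Suc l)
  let ?R' = "{x \<in> Rn (ns 0). multi_sig Ws bs ns (Suc l) x = s}"
  let ?sig = "\<lambda>x. signature (Ws (Suc l)) (bs (Suc l)) (ns l) (ns (Suc l)) (net_out Ws bs ns l x)"
  show ?case
  proof (cases "?R' = {}")
    case True then show ?thesis using aff_empty by metis
  next
    case False
    then obtain x0 where x0: "x0 \<in> ?R'" by blast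
    define s0 where "s0 = multi_sig Ws bs ns l x0"
    define t where "t = ?sig x0"
    have s: "s = s0 @ [t]" using x0 by (simp add: ms_Suc s0_def t_def)
    have R': "?R' = {x \<in> Rn (ns 0). multi_sig Ws bs ns l x = s0 \<and> ?sig x = t}"
      by (auto simp: ms_Suc s)
    have IH: "aff ?R' (net_out Ws bs ns l) (dmin (ns 0) s0) (ns l)"
      using Suc.IH[of s0] by (rule aff_subset) (auto simp: R')
    have sg: "\<forall>x\<in>?R'. ?sig x = t" using R' by auto
    have a1: "aff ?R' (net_out Ws bs ns (Suc l)) (dmin (ns 0) s0) (ns (Suc l))"
      using aff_relu[OF IH sg] by (simp only: net_out_Suc_fun)
    have a2: "aff ?R' (net_out Ws bs ns (Suc l)) (length (filter id t)) (ns (Suc l))"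
      using aff_relu_cnt[OF sg] by (simp only: net_out_Suc_fun)
    have e: "dmin (ns 0) s = min (dmin (ns 0) s0) (length (filter id t))" using s by simp
    show ?thesis unfolding e by (rule aff_min[OF a1 a2])
  qed
qed

lemma finite_bool_lists: "finite {xs::bool list. length xs = n}"
  using finite_lists_length_eq[of "UNIV::bool set" n] by simp

lemma sig_length: "length (signature W b n n' y) = n'"
  by (simp add: signature_def)

lemma finite_sig_set: "finite (sig_set W b n n')"
  by (rule finite_subset[OF _ finite_bool_lists[of n']]) (auto simp: sig_set_def sig_length)

lemma act_hist_zero:
  assumes "\<forall>s\<in>S. length s \<le> N" "j > N"
  shows "act_hist S j = 0"
proof -
  have "{s \<in> S. length (filter id s) = j} = {}"
    using assms by (metis (mono_tags, lifting) Collect_empty_eq leD length_filter_le order_trans)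
  then show ?thesis by (metis act_hist_def card.empty)
qed

lemma RL_hists_props:
  assumes "1 \<le> m"
  shows "finite (RL_hists m n')" "\<forall>w\<in>RL_hists m n'. \<forall>j>n'. w j = 0"
    "act_hist (sig_set W b m n') \<in> RL_hists m n'"
proof -
  have "RL_hists m n' \<subseteq> act_hist ` Pow {xs::bool list. length xs = n'}"
    using assms by (auto simp: RL_hists_def sig_set_def sig_length)
  then show "finite (RL_hists m n')"
    by (rule finite_subset) (simp add: finite_bool_lists)
  show "\<forall>w\<in>RL_hists m n'. \<forall>j>n'. w j = 0"
    using assms by (auto simp: RL_hists_def sig_set_def sig_length intro!: act_hist_zero)
  show "act_hist (sig_set W b m n') \<in> RL_hists m n'"
    using assms by (auto simp: RL_hists_def)
qed

lemma tail_unit0: "tail (e\<^sub>h 0) 0 = 1"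
proof -
  have "\<forall>j>0. e\<^sub>h 0 j = 0" by (simp add: unit_hist_def)
  from tail_upto[OF this] show ?thesis by (simp add: unit_hist_def)
qed

lemma children_bound:
  assumes G: "in_Gamma \<gamma>" and n': "1 \<le> ns (Suc l)"
    and J: "J \<le> min (dmin (ns 0) s) (ns (Suc l))"
  shows "card {t \<in> (\<lambda>x. signature (Ws (Suc l)) (bs (Suc l)) (ns l) (ns (Suc l)) (net_out Ws bs ns l x))
              ` {x \<in> Rn (ns 0). multi_sig Ws bs ns l x = s}. J \<le> length (filter id t)}
    \<le> tail (\<gamma> (min (dmin (ns 0) s) (ns (Suc l))) (ns (Suc l))) J"
proof -
  define n where "n = ns l"
  define N where "N = ns (Suc l)"
  define W where "W = Ws (Suc l)"
  define b where "b = bs (Suc l)"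
  define R where "R = {x \<in> Rn (ns 0). multi_sig Ws bs ns l x = s}"
  define m where "m = min (dmin (ns 0) s) N"
  define q where "q x = preact W b n (net_out Ws bs ns l x)" for x
  define C where "C = (\<lambda>x. signature W b n N (net_out Ws bs ns l x)) ` R"
  have "aff R q (dmin (ns 0) s) N"
    unfolding q_def R_def n_def using geom by (rule aff_preact)
  moreover have "aff R q N N" by (rule aff_coord)
  ultimately have "aff R q m N" unfolding m_def by (rule aff_min)
  then obtain c u where cu: "\<forall>x\<in>R. \<exists>\<tau>. \<forall>j<N. q x j = c j + (\<Sum>i<m. \<tau> i * u i j)"
    unfolding aff_def by blast
  have sigq: "signature W b n N (net_out Ws bs ns l x) = map (\<lambda>j. q x j > 0) [0..<N]" for x
    by (simp add: signature_def q_def)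
  have hmax: "hist_le (hist_max (RL_hists m N)) (\<gamma> m N)"
    using G n' unfolding in_Gamma_def m_def N_def by auto
  have goal: "card {t \<in> C. J \<le> length (filter id t)} \<le> tail (\<gamma> m N) J"
  proof (cases "m = 0")
    case True
    then have J0: "J = 0" using J unfolding m_def N_def by simp
    have "C \<subseteq> {map (\<lambda>j. c j > 0) [0..<N]}"
    proof
      fix t assume "t \<in> C"
      then obtain x where x: "x \<in> R" and t: "t = signature W b n N (net_out Ws bs ns l x)"
        unfolding C_def by blast
      obtain \<tau> where "\<forall>j<N. q x j = c j + (\<Sum>i<m. \<tau> i * u i j)" using cu x by blast
      then have "\<forall>j<N. q x j = c j" using True by simp
      then show "t \<in> {map (\<lambda>j. c j > 0) [0..<N]}" using t sigq by simp
    qed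
    then have "card {t \<in> C. J \<le> length (filter id t)} \<le> card {map (\<lambda>j. c j > 0) [0..<N]}"
      by (intro card_mono) auto
    then have "card {t \<in> C. J \<le> length (filter id t)} \<le> 1" by simp
    also have "1 \<le> tail (\<gamma> m N) J"
    proof -
      have "tail (e\<^sub>h 0) 0 \<le> tail (hist_max {e\<^sub>h 0}) 0"
        by (rule tail_hist_max_ge[where B=0]) (auto simp: unit_hist_def)
      moreover have "RL_hists m N = {e\<^sub>h 0}" using True by (simp add: RL_hists_def)
      ultimately show ?thesis using hmax J0 tail_unit0 unfolding hist_le_def by (metis le_trans)
    qed
    finally show ?thesis .
  next
    case False
    then have m1: "1 \<le> m" by simp
    define W' where "W' j i = u i j" for j i
    have CS: "C \<subseteq> sig_set W' c m N"
    proof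
      fix t assume "t \<in> C"
      then obtain x where x: "x \<in> R" and t: "t = signature W b n N (net_out Ws bs ns l x)"
        unfolding C_def by blast
      obtain \<tau> where tau: "\<forall>j<N. q x j = c j + (\<Sum>i<m. \<tau> i * u i j)" using cu x by blast
      define \<tau>' where "\<tau>' i = (if i < m then \<tau> i else 0)" for i
      have "\<tau>' \<in> Rn m" by (simp add: Rn_def \<tau>'_def)
      moreover have "preact W' c m \<tau>' j = q x j" if "j < N" for j
        using tau that by (simp add: preact_def W'_def \<tau>'_def mult.commute)
      then have "signature W' c m N \<tau>' = t"
        using t sigq by (simp add: signature_def)
      ultimately show "t \<in> sig_set W' c m N" unfolding sig_set_def by blast
    qed
    have "card {t \<in> C. J \<le> length (filter id t)} \<le> card {t \<in> sig_set W' c m N. J \<le> length (filter id t)}"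
      using CS finite_sig_set by (intro card_mono) auto
    also have "\<dots> = tail (act_hist (sig_set W' c m N)) J"
      by (rule tail_act_hist[symmetric, OF finite_sig_set]) (auto simp: sig_set_def sig_length)
    also have "\<dots> \<le> tail (hist_max (RL_hists m N)) J"
      using RL_hists_props[OF m1] by (intro tail_hist_max_ge) auto
    also have "\<dots> \<le> tail (\<gamma> m N) J" using hmax unfolding hist_le_def by blast
    finally show ?thesis .
  qed
  then show ?thesis unfolding C_def m_def N_def W_def b_def n_def R_def .
qed


lemma Rn_ne: "(\<lambda>_. 0) \<in> Rn n" by (simp add: Rn_def)

lemma mono_g:
  assumes G: "in_Gamma \<gamma>" and n': "1 \<le> n'"
  shows "mono (\<lambda>k. tail (clip (min k n') (\<gamma> (min k n') n')) J)"
proof (rule monoI)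
  fix k k' :: nat assume kk: "k \<le> k'"
  define m where "m = min k n'"
  define m' where "m' = min k' n'"
  have mm: "m \<le> m'" "m' \<le> n'" using kk by (auto simp: m_def m'_def)
  have h1: "is_hist (\<gamma> m n')" "is_hist (\<gamma> m' n')" using G n' mm unfolding in_Gamma_def by auto
  obtain B where B: "\<forall>j>B. \<gamma> m n' j = 0" using is_hist_bound[OF h1(1)] by blast
  obtain B' where B': "\<forall>j>B'. \<gamma> m' n' j = 0" using is_hist_bound[OF h1(2)] by blast
  have hl: "hist_le (\<gamma> m n') (\<gamma> m' n')" using G n' mm unfolding in_Gamma_def by auto
  show "tail (clip (min k n') (\<gamma> (min k n') n')) J \<le> tail (clip (min k' n') (\<gamma> (min k' n') n')) J"
    unfolding m_def[symmetric] m'_def[symmetric] tail_clip[OF B] tail_clip[OF B']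
    using hl mm unfolding hist_le_def by auto
qed

lemma main_induct:
  assumes G: "in_Gamma \<gamma>" and ns: "\<forall>l\<le>L. 1 \<le> ns l" and lL: "l \<le> L"
  shows "finite (multi_sig_set Ws bs ns l) \<and> (\<forall>j > ns l. trans_iter \<gamma> ns l j = 0) \<and>
    (\<forall>J. card {s \<in> multi_sig_set Ws bs ns l. J \<le> dmin (ns 0) s} \<le> tail (trans_iter \<gamma> ns l) J)"
  using lL
proof (induction l)
  case 0
  have S0: "multi_sig_set Ws bs ns 0 = {[]}"
    using Rn_ne by (auto simp: multi_sig_set_def)
  have z: "\<forall>j > ns 0. trans_iter \<gamma> ns 0 j = 0" by (simp add: unit_hist_def)
  have "card {s \<in> multi_sig_set Ws bs ns 0. J \<le> dmin (ns 0) s} \<le> tail (trans_iter \<gamma> ns 0) J" for J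
  proof -
    have "tail (trans_iter \<gamma> ns 0) J = (\<Sum>j\<in>{J..ns 0}. e\<^sub>h (ns 0) j)"
      using tail_upto[OF z] by simp
    also have "\<dots> = (if J \<le> ns 0 then 1 else 0)"
      by (simp add: unit_hist_def)
    finally have t: "tail (trans_iter \<gamma> ns 0) J = (if J \<le> ns 0 then 1 else 0)" .
    show ?thesis
    proof (cases "J \<le> ns 0")
      case True
      have "{s \<in> multi_sig_set Ws bs ns 0. J \<le> dmin (ns 0) s} \<subseteq> {[]}" using S0 by blast
      then have "card {s \<in> multi_sig_set Ws bs ns 0. J \<le> dmin (ns 0) s} \<le> card {[]::bool list list}"
        by (intro card_mono) auto
      then show ?thesis using t True by simp
    next
      case False
      have "{s \<in> multi_sig_set Ws bs ns 0. J \<le> dmin (ns 0) s} = {}" using S0 False by auto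
      then show ?thesis by (simp only: card.empty)
    qed
  qed
  then show ?case using z by (simp add: S0)
next
  case (Suc l)
  then have IH: "finite (multi_sig_set Ws bs ns l)" "\<forall>j > ns l. trans_iter \<gamma> ns l j = 0"
    "\<forall>J. card {s \<in> multi_sig_set Ws bs ns l. J \<le> dmin (ns 0) s} \<le> tail (trans_iter \<gamma> ns l) J"
    by auto
  define S where "S = multi_sig_set Ws bs ns l"
  define S' where "S' = multi_sig_set Ws bs ns (Suc l)"
  define n' where "n' = ns (Suc l)"
  have n'1: "1 \<le> n'" using ns Suc.prems unfolding n'_def by auto
  define sig where "sig x = signature (Ws (Suc l)) (bs (Suc l)) (ns l) (ns (Suc l)) (net_out Ws bs ns l x)" for x
  define C where "C s = sig ` {x \<in> Rn (ns 0). multi_sig Ws bs ns l x = s}" for s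
  define v where "v = trans_iter \<gamma> ns l"
  define cnt where "cnt t = length (filter id t)" for t :: "bool list"
  have finS: "finite S" using IH unfolding S_def by simp
  have Clen: "length t = n'" if "t \<in> C s" for s t
    using that by (auto simp: C_def sig_def sig_length n'_def)
  have finC: "finite (C s)" for s
    by (rule finite_subset[OF _ finite_bool_lists[of n']]) (auto simp: Clen)
  have S'eq: "S' = (\<lambda>(s, t). s @ [t]) ` Sigma S C"
  proof
    show "S' \<subseteq> (\<lambda>(s, t). s @ [t]) ` Sigma S C"
    proof
      fix s' assume "s' \<in> S'"
      then obtain x where x: "x \<in> Rn (ns 0)" "s' = multi_sig Ws bs ns (Suc l) x"
        unfolding S'_def multi_sig_set_def by blast
      then have "s' = multi_sig Ws bs ns l x @ [sig x]" by (simp add: ms_Suc sig_def)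
      moreover have "(multi_sig Ws bs ns l x, sig x) \<in> Sigma S C"
        using x unfolding S_def C_def multi_sig_set_def by blast
      ultimately show "s' \<in> (\<lambda>(s, t). s @ [t]) ` Sigma S C" by force
    qed
    show "(\<lambda>(s, t). s @ [t]) ` Sigma S C \<subseteq> S'"
    proof
      fix s' assume "s' \<in> (\<lambda>(s, t). s @ [t]) ` Sigma S C"
      then obtain s t where st: "s' = s @ [t]" "s \<in> S" "t \<in> C s" by auto
      then obtain x where x: "x \<in> Rn (ns 0)" "multi_sig Ws bs ns l x = s" "t = sig x"
        unfolding C_def by blast
      then have "s' = multi_sig Ws bs ns (Suc l) x" using st by (simp add: ms_Suc sig_def)
      then show "s' \<in> S'" using x unfolding S'_def multi_sig_set_def by blast
    qed
  qed
  have inj: "inj_on (\<lambda>(s, t). s @ [t]) X" for X :: "(bool list list \<times> bool list) set"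
    by (rule inj_onI) auto
  have finS': "finite S'" unfolding S'eq using finS finC by auto
  have z: "\<forall>j > ns (Suc l). trans_iter \<gamma> ns (Suc l) j = 0"
    using trans_map_zero by simp
  have "{k. v k \<noteq> 0} \<subseteq> {..ns l}"
  proof
    fix k assume k: "k \<in> {k. v k \<noteq> 0}"
    show "k \<in> {..ns l}"
    proof (rule ccontr)
      assume "k \<notin> {..ns l}"
      then have "k > ns l" by simp
      then show False using IH(2) k unfolding v_def by simp
    qed
  qed
  then have finK: "finite {k. v k \<noteq> 0}" by (rule finite_subset) simp
  have bound: "card {s \<in> S'. J \<le> dmin (ns 0) s} \<le> tail (trans_iter \<gamma> ns (Suc l)) J" for J
  proof -
    define g where "g k = tail (clip (min k n') (\<gamma> (min k n') n')) J" for k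
    define T where "T = (SIGMA s:S. {t \<in> C s. J \<le> min (dmin (ns 0) s) (cnt t)})"
    have "{s \<in> S'. J \<le> dmin (ns 0) s} = (\<lambda>(s, t). s @ [t]) ` T"
    proof
      show "{s \<in> S'. J \<le> dmin (ns 0) s} \<subseteq> (\<lambda>(s, t). s @ [t]) ` T"
      proof
        fix s' assume s': "s' \<in> {s \<in> S'. J \<le> dmin (ns 0) s}"
        then have "s' \<in> (\<lambda>(s, t). s @ [t]) ` Sigma S C" using S'eq by blast
        then obtain s t where st: "s' = s @ [t]" "s \<in> S" "t \<in> C s" by auto
        then have "(s, t) \<in> T" using s' unfolding T_def cnt_def by simp
        then show "s' \<in> (\<lambda>(s, t). s @ [t]) ` T" using st by force
      qed
      show "(\<lambda>(s, t). s @ [t]) ` T \<subseteq> {s \<in> S'. J \<le> dmin (ns 0) s}"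
      proof
        fix s' assume "s' \<in> (\<lambda>(s, t). s @ [t]) ` T"
        then obtain s t where st: "s' = s @ [t]" "(s, t) \<in> T" by auto
        then have "s \<in> S" "t \<in> C s" "J \<le> dmin (ns 0) s'" unfolding T_def cnt_def by auto
        moreover have "s' \<in> S'" unfolding S'eq using st calculation by force
        ultimately show "s' \<in> {s \<in> S'. J \<le> dmin (ns 0) s}" by blast
      qed
    qed
    then have "card {s \<in> S'. J \<le> dmin (ns 0) s} = card T"
      using card_image[OF inj[of T]] by simp
    also have "card T = (\<Sum>s\<in>S. card {t \<in> C s. J \<le> min (dmin (ns 0) s) (cnt t)})"
      unfolding T_def using finS finC by (intro card_SigmaI) auto
    also have "\<dots> \<le> (\<Sum>s\<in>S. g (dmin (ns 0) s))"
    proof (rule sum_mono)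
      fix s assume "s \<in> S"
      define m where "m = min (dmin (ns 0) s) n'"
      have hm: "is_hist (\<gamma> m n')" using G n'1 unfolding in_Gamma_def m_def by auto
      obtain B where B: "\<forall>j>B. \<gamma> m n' j = 0" using is_hist_bound[OF hm] by blast
      show "card {t \<in> C s. J \<le> min (dmin (ns 0) s) (cnt t)} \<le> g (dmin (ns 0) s)"
      proof (cases "J \<le> m")
        case True
        have "{t \<in> C s. J \<le> min (dmin (ns 0) s) (cnt t)} = {t \<in> C s. J \<le> cnt t}"
          using True unfolding m_def by auto
        also have "card \<dots> \<le> tail (\<gamma> m n') J"
          using children_bound[OF G, where l=l and J=J and s=s and Ws=Ws and bs=bs] n'1 True
          unfolding C_def sig_def cnt_def m_def n'_def by simp
        also have "\<dots> = g (dmin (ns 0) s)"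
          unfolding g_def m_def[symmetric] tail_clip[OF B] using True by simp
        finally show ?thesis by simp
      next
        case False
        have "{t \<in> C s. J \<le> min (dmin (ns 0) s) (cnt t)} = {}"
        proof -
          have "cnt t \<le> n'" if "t \<in> C s" for t
            using Clen[OF that] unfolding cnt_def by (metis length_filter_le)
          then show ?thesis using False unfolding m_def by fastforce
        qed
        then show ?thesis by (simp only: card.empty zero_le)
      qed
    qed
    also have "\<dots> \<le> (\<Sum>k\<in>{k. v k \<noteq> 0}. v k * g k)"
    proof (rule abel[OF finS finK])
      show "mono g" unfolding g_def by (rule mono_g[OF G n'1])
      show "\<forall>J. card {s \<in> S. J \<le> dmin (ns 0) s} \<le> (\<Sum>k\<in>{k \<in> {k. v k \<noteq> 0}. J \<le> k}. v k)"
      proof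
        fix J
        have "{k \<in> {k. v k \<noteq> 0}. J \<le> k} = {j. J \<le> j \<and> v j \<noteq> 0}" by auto
        then show "card {s \<in> S. J \<le> dmin (ns 0) s} \<le> (\<Sum>k\<in>{k \<in> {k. v k \<noteq> 0}. J \<le> k}. v k)"
          using IH(3) unfolding S_def v_def tail_def by simp
      qed
    qed
    also have "\<dots> = tail (trans_map \<gamma> n' v) J"
      unfolding g_def by (rule tail_trans_map[OF finK, symmetric])
    also have "\<dots> = tail (trans_iter \<gamma> ns (Suc l)) J"
      by (simp add: v_def n'_def)
    finally show ?thesis .
  qed
  show ?case using finS' z bound unfolding S'_def by blast
qed

theorem mainTheorem1:
  fixes Ws :: "nat \<Rightarrow> nat \<Rightarrow> nat \<Rightarrow> real" and bs :: "nat \<Rightarrow> nat \<Rightarrow> real"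
    and ns :: "nat \<Rightarrow> nat" and L :: nat and \<gamma> :: "nat \<Rightarrow> nat \<Rightarrow> nat \<Rightarrow> nat"
  assumes "1 \<le> L"
    and "\<forall>l\<le>L. 1 \<le> ns l"
    and "in_Gamma \<gamma>"
  shows "card (multi_sig_set Ws bs ns L) \<le> norm1 (trans_iter \<gamma> ns L)"
proof -
  have "card {s \<in> multi_sig_set Ws bs ns L. 0 \<le> dmin (ns 0) s} \<le> tail (trans_iter \<gamma> ns L) 0"
    using main_induct[OF assms(3) assms(2) order_refl] by blast
  then show ?thesis by (simp add: norm1_tail)
qed

end
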